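(* In every financial network without default cost (i.e., with $\delta=1$), for any distinct banks $v,w$, there is no positive multi-trade of incoming edges of creditor $v$ to buyer $w$; that is, there is no such multi-trade whose post-trade assets satisfy both $a'_v>a_v$ and $a'_w>a_w$.
   Context: A financial network is $\mathcal{F}=(V,E,\ell,a^x)$: $V$ is a finite set of banks, $E$ a set of directed edges, where $(u,v)\in E$ means debtor $u$ owes creditor $v$ the liability $\ell_{(u,v)}\in\mathbb{N}_{>0}$, and $a^x_b\in\mathbb{N}_{\ge 0}$ are the external assets of bank $b$. $E^+(b)$ and $E^-(b)$ denote the outgoing and incoming edges of $b$, and $L_b=\sum_{e\in E^+(b)}\ell_e$. There is a default-cost parameter $\delta\in[0,1]$. For a payment vector $p=(p_e)_{e\in E}\ge 0$, bank $b$ is solvent if $a^x_b+\sum_{e\in E^-(b)}p_e\ge L_b$, and then its total assets are $a_b=a^x_b+\sum_{e\in E^-(b)}p_e$; otherwise $b$ is in default and $a_b=\delta\,(a^x_b+\sum_{e\in E^-(b)}p_e)$. A fixed point is a vector $p$ with $p_e=\min\{a_b,L_b\}\ell_e/L_b$ for all $b$ and $e\in E^+(b)$. The fixed points form a complete lattice, and the clearing state is its supremum. Assets $a_b$ and recovery rates $r_b=\min\{a_b/L_b,1\}$ always refer to the clearing state. Multi-trade of incoming edges: for distinct banks $v$ (creditor) and $w$ (buyer), let $e_1,\dots,e_k$ be the edges of $E^-(v)\setminus\{(w,v)\}$, with $e_i=(u_i,v)$. Choose fractions $\beta_i\in[0,1]$ and haircut rates $\alpha_i\in[0,1]$, with total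 return $\rho=\sum_i\alpha_i\beta_i\ell_{e_i}\le a^x_w$. In the post-trade network $\mathcal{F}'$, the liability of $e_i$ becomes $(1-\beta_i)\ell_{e_i}$ and $\beta_i\ell_{e_i}$ is added to the liability of edge $(u_i,w)$ (which is created if absent). The external assets of $v$ become $a^x_v+\rho$, those of $w$ become $a^x_w-\rho$, and everything else is unchanged. Post-trade assets $a'_b$ are those in the clearing state of $\mathcal{F}'$, while $a_b$ are those of $\mathcal{F}$. *)

theory Defs
  imports Complex_Main
begin

text \<open>A (real-valued) financial network is given by a finite bank set V, a liability
function l (an edge (u,v) exists iff l u v > 0, debtor u, creditor v) and external
assets ax.\<close>

definition total_liab :: "'b set \<Rightarrow> ('b \<Rightarrow> 'b \<Rightarrow> real) \<Rightarrow> 'b \<Rightarrow> real" where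
  "total_liab V l b = (\<Sum>v\<in>V. l b v)"

definition gross_assets :: "'b set \<Rightarrow> ('b \<Rightarrow> 'b \<Rightarrow> real) \<Rightarrow> ('b \<Rightarrow> real)
    \<Rightarrow> ('b \<Rightarrow> 'b \<Rightarrow> real) \<Rightarrow> 'b \<Rightarrow> real" where
  "gross_assets V l ax p b = ax b + (\<Sum>u\<in>{u\<in>V. l u b > 0}. p u b)"

definition assets :: "real \<Rightarrow> 'b set \<Rightarrow> ('b \<Rightarrow> 'b \<Rightarrow> real) \<Rightarrow> ('b \<Rightarrow> real)
    \<Rightarrow> ('b \<Rightarrow> 'b \<Rightarrow> real) \<Rightarrow> 'b \<Rightarrow> real" where
  "assets \<delta> V l ax p b =
     (if gross_assets V l ax p b \<ge> total_liab V l b then gross_assets V l ax p b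
      else \<delta> * gross_assets V l ax p b)"

definition fixed_point :: "real \<Rightarrow> 'b set \<Rightarrow> ('b \<Rightarrow> 'b \<Rightarrow> real) \<Rightarrow> ('b \<Rightarrow> real)
    \<Rightarrow> ('b \<Rightarrow> 'b \<Rightarrow> real) \<Rightarrow> bool" where
  "fixed_point \<delta> V l ax p \<longleftrightarrow>
     (\<forall>u v. if u \<in> V \<and> v \<in> V \<and> l u v > 0
            then p u v = min (assets \<delta> V l ax p u) (total_liab V l u) * l u v / total_liab V l u
            else p u v = 0)"

definition clearing_state :: "real \<Rightarrow> 'b set \<Rightarrow> ('b \<Rightarrow> 'b \<Rightarrow> real) \<Rightarrow> ('b \<Rightarrow> real)
    \<Rightarrow> ('b \<Rightarrow> 'b \<Rightarrow> real)" where
  "clearing_state \<delta> V l ax = (GREATEST p. fixed_point \<delta> V l ax p)"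

definition clearing_assets :: "real \<Rightarrow> 'b set \<Rightarrow> ('b \<Rightarrow> 'b \<Rightarrow> real) \<Rightarrow> ('b \<Rightarrow> real)
    \<Rightarrow> 'b \<Rightarrow> real" where
  "clearing_assets \<delta> V l ax b = assets \<delta> V l ax (clearing_state \<delta> V l ax) b"

text \<open>Multi-trade of incoming edges of creditor v to buyer w. The traded edges are
E^-(v) minus (w,v), indexed by their debtors u; beta u, alpha u are fraction and haircut.\<close>

definition traded_debtors :: "'b set \<Rightarrow> ('b \<Rightarrow> 'b \<Rightarrow> real) \<Rightarrow> 'b \<Rightarrow> 'b \<Rightarrow> 'b set" where
  "traded_debtors V l v w = {u \<in> V. u \<noteq> w \<and> l u v > 0}"

definition trade_return :: "'b set \<Rightarrow> ('b \<Rightarrow> 'b \<Rightarrow> real) \<Rightarrow> 'b \<Rightarrow> 'b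
    \<Rightarrow> ('b \<Rightarrow> real) \<Rightarrow> ('b \<Rightarrow> real) \<Rightarrow> real" where
  "trade_return V l v w \<alpha> \<beta> = (\<Sum>u\<in>traded_debtors V l v w. \<alpha> u * \<beta> u * l u v)"

definition valid_multi_trade :: "'b set \<Rightarrow> ('b \<Rightarrow> 'b \<Rightarrow> real) \<Rightarrow> ('b \<Rightarrow> real) \<Rightarrow> 'b \<Rightarrow> 'b
    \<Rightarrow> ('b \<Rightarrow> real) \<Rightarrow> ('b \<Rightarrow> real) \<Rightarrow> bool" where
  "valid_multi_trade V l ax v w \<alpha> \<beta> \<longleftrightarrow>
     v \<in> V \<and> w \<in> V \<and> v \<noteq> w \<and>
     (\<forall>u\<in>traded_debtors V l v w. 0 \<le> \<alpha> u \<and> \<alpha> u \<le> 1 \<and> 0 \<le> \<beta> u \<and> \<beta> u \<le> 1) \<and>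
     trade_return V l v w \<alpha> \<beta> \<le> ax w"

definition trade_liab :: "'b set \<Rightarrow> ('b \<Rightarrow> 'b \<Rightarrow> real) \<Rightarrow> 'b \<Rightarrow> 'b
    \<Rightarrow> ('b \<Rightarrow> real) \<Rightarrow> ('b \<Rightarrow> 'b \<Rightarrow> real)" where
  "trade_liab V l v w \<beta> = (\<lambda>x y.
     if x \<in> traded_debtors V l v w \<and> y = v then (1 - \<beta> x) * l x v
     else if x \<in> traded_debtors V l v w \<and> y = w then l x w + \<beta> x * l x v
     else l x y)"

definition trade_ext :: "'b set \<Rightarrow> ('b \<Rightarrow> 'b \<Rightarrow> real) \<Rightarrow> ('b \<Rightarrow> real) \<Rightarrow> 'b \<Rightarrow> 'b
    \<Rightarrow> ('b \<Rightarrow> real) \<Rightarrow> ('b \<Rightarrow> real) \<Rightarrow> ('b \<Rightarrow> real)" where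
  "trade_ext V l ax v w \<alpha> \<beta> = (\<lambda>b.
     if b = v then ax v + trade_return V l v w \<alpha> \<beta>
     else if b = w then ax w - trade_return V l v w \<alpha> \<beta>
     else ax b)"

end

theory Submission
  imports Defs
begin

definition Fm :: "'b set \<Rightarrow> ('b \<Rightarrow> 'b \<Rightarrow> real) \<Rightarrow> ('b \<Rightarrow> real) \<Rightarrow> ('b \<Rightarrow> 'b \<Rightarrow> real) \<Rightarrow> ('b \<Rightarrow> 'b \<Rightarrow> real)" where
  "Fm V l ax p = (\<lambda>u v. if u \<in> V \<and> v \<in> V \<and> l u v > 0
      then min (gross_assets V l ax p u) (total_liab V l u) * l u v / total_liab V l u else 0)"

lemma assets1: "assets 1 V l ax p b = gross_assets V l ax p b"
  by (simp add: assets_def)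

lemma fixed_point_Fm: "fixed_point 1 V l ax p \<longleftrightarrow> Fm V l ax p = p"
proof -
  have "fixed_point 1 V l ax p \<longleftrightarrow> (\<forall>u v. Fm V l ax p u v = p u v)"
    unfolding fixed_point_def Fm_def assets1 by (intro iff_allI) auto
  thus ?thesis by (simp add: fun_eq_iff)
qed

lemma L_pos:
  assumes "finite V" "\<forall>x y. 0 \<le> l x y" "u \<in> V" "v \<in> V" "l u v > 0"
  shows "total_liab V l u > 0"
proof -
  have "l u v \<le> total_liab V l u" unfolding total_liab_def
    using assms by (intro member_le_sum) auto
  thus ?thesis using assms by linarith
qed

lemma Fm_mono:
  assumes "finite V" "\<forall>x y. 0 \<le> l x y" "\<forall>x y. p x y \<le> q x y"
  shows "Fm V l ax p u v \<le> Fm V l ax q u v"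
proof (cases "u \<in> V \<and> v \<in> V \<and> l u v > 0")
  case True
  have L: "total_liab V l u > 0" using True L_pos[OF assms(1,2), of u v] by simp
  have g: "gross_assets V l ax p u \<le> gross_assets V l ax q u"
    unfolding gross_assets_def using assms(3) by (simp add: sum_mono)
  have "min (gross_assets V l ax p u) (total_liab V l u) * l u v
        \<le> min (gross_assets V l ax q u) (total_liab V l u) * l u v"
    using g True by (intro mult_right_mono min.mono) auto
  then show ?thesis using True L unfolding Fm_def by (simp add: divide_right_mono)
next
  case False thus ?thesis unfolding Fm_def if_not_P[OF False] by simp
qed

lemma Fm_nonneg:
  assumes "finite V" "\<forall>x y. 0 \<le> l x y" "\<forall>b. 0 \<le> ax b" "\<forall>x y. 0 \<le> p x y"
  shows "0 \<le> Fm V l ax p u v"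
proof (cases "u \<in> V \<and> v \<in> V \<and> l u v > 0")
  case True
  have L: "total_liab V l u > 0" using True L_pos[OF assms(1,2), of u v] by simp
  have g: "0 \<le> gross_assets V l ax p u"
    unfolding gross_assets_def using assms(3,4) by (simp add: sum_nonneg)
  show ?thesis using True L g unfolding Fm_def by simp
next
  case False thus ?thesis unfolding Fm_def if_not_P[OF False] by simp
qed

lemma Fm_le:
  assumes "finite V" "\<forall>x y. 0 \<le> l x y"
  shows "Fm V l ax p u v \<le> l u v"
proof (cases "u \<in> V \<and> v \<in> V \<and> l u v > 0")
  case True
  have L: "total_liab V l u > 0" using True L_pos[OF assms(1,2), of u v] by simp
  have "min (gross_assets V l ax p u) (total_liab V l u) * l u v \<le> total_liab V l u * l u v"
    using True by (intro mult_right_mono min.cobounded2) auto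
  then show ?thesis using True L unfolding Fm_def by (simp add: divide_le_eq mult.commute)
next
  case False thus ?thesis unfolding Fm_def if_not_P[OF False] using assms by simp
qed

lemma clearing_props:
  assumes fin: "finite V" and nn: "\<forall>x y. 0 \<le> l x y" and axn: "\<forall>b. 0 \<le> ax b"
  shows "fixed_point 1 V l ax (clearing_state 1 V l ax)
     \<and> (\<forall>q. fixed_point 1 V l ax q \<longrightarrow> q \<le> clearing_state 1 V l ax)
     \<and> (\<forall>u b. 0 \<le> clearing_state 1 V l ax u b)"
proof -
  define F where "F = Fm V l ax"
  define Q where "Q = {p. (\<forall>u v. 0 \<le> p u v \<and> p u v \<le> l u v) \<and> (\<forall>u v. p u v \<le> F p u v)}"
  define ps where "ps = (\<lambda>u v. Sup ((\<lambda>q. q u v) ` Q))"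
  have mono: "\<And>p q u v. \<forall>x y. p x y \<le> q x y \<Longrightarrow> F p u v \<le> F q u v"
    unfolding F_def by (rule Fm_mono[OF fin nn])
  have Fle: "\<And>p u v. F p u v \<le> l u v" unfolding F_def by (rule Fm_le[OF fin nn])
  have Fnn: "\<And>p u v. \<forall>x y. 0 \<le> p x y \<Longrightarrow> 0 \<le> F p u v" unfolding F_def by (rule Fm_nonneg[OF fin nn axn])
  have zQ: "(\<lambda>u v. 0) \<in> Q" unfolding Q_def using nn Fnn[of "\<lambda>u v. 0"] by simp
  have bdd: "\<And>u v. bdd_above ((\<lambda>q. q u v) ` Q)"
  proof -
    fix u v show "bdd_above ((\<lambda>q. q u v) ` Q)"
      by (rule bdd_aboveI[of _ "l u v"]) (auto simp: Q_def)
  qed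
  have upper: "\<And>q u v. q \<in> Q \<Longrightarrow> q u v \<le> ps u v"
    unfolding ps_def by (rule cSup_upper[OF imageI bdd])
  have psnn: "\<And>u v. 0 \<le> ps u v" using upper[OF zQ] by simp
  have ps1: "\<And>u v. ps u v \<le> F ps u v"
  proof -
    fix u v
    have "Sup ((\<lambda>q. q u v) ` Q) \<le> F ps u v"
    proof (rule cSup_least)
      show "(\<lambda>q. q u v) ` Q \<noteq> {}" using zQ by blast
    next
      fix x assume "x \<in> (\<lambda>q. q u v) ` Q"
      then obtain q where q: "q \<in> Q" "x = q u v" by blast
      have "q u v \<le> F q u v" using q(1) unfolding Q_def by blast
      also have "\<dots> \<le> F ps u v" by (rule mono) (use upper[OF q(1)] in blast)
      finally show "x \<le> F ps u v" using q(2) by simp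
    qed
    thus "ps u v \<le> F ps u v" by (simp add: ps_def)
  qed
  have FQ: "F ps \<in> Q" unfolding Q_def
  proof (intro CollectI conjI allI)
    fix u v
    show "0 \<le> F ps u v" by (rule Fnn) (use psnn in blast)
    show "F ps u v \<le> l u v" by (rule Fle)
    show "F ps u v \<le> F (F ps) u v" by (rule mono) (use ps1 in blast)
  qed
  have ps2: "\<And>u v. F ps u v \<le> ps u v" by (rule upper[OF FQ])
  have fp: "F ps = ps"
  proof (intro ext)
    fix u v show "F ps u v = ps u v" using ps1[of u v] ps2[of u v] by linarith
  qed
  have great: "\<And>q. fixed_point 1 V l ax q \<Longrightarrow> q \<le> ps"
  proof -
    fix q assume "fixed_point 1 V l ax q"
    hence fq: "F q = q" unfolding F_def fixed_point_Fm .
    define m where "m = (\<lambda>u v. max (q u v) 0)"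
    have mQ: "m \<in> Q" unfolding Q_def
    proof (intro CollectI conjI allI)
      fix u v
      show "0 \<le> m u v" unfolding m_def by simp
      have "q u v \<le> l u v" using Fle[of q u v] fq by simp
      thus "m u v \<le> l u v" unfolding m_def using nn by simp
      have "F q u v \<le> F m u v" by (rule mono) (simp add: m_def)
      hence "q u v \<le> F m u v" using fq by simp
      moreover have "0 \<le> F m u v" by (rule Fnn) (simp add: m_def)
      ultimately show "m u v \<le> F m u v" unfolding m_def by simp
    qed
    have "\<And>u v. q u v \<le> ps u v"
    proof -
      fix u v have "m u v \<le> ps u v" by (rule upper[OF mQ])
      thus "q u v \<le> ps u v" unfolding m_def by simp
    qed
    thus "q \<le> ps" by (simp add: le_fun_def)
  qed
  have fpps: "fixed_point 1 V l ax ps" using fp unfolding F_def fixed_point_Fm .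
  have cs: "clearing_state 1 V l ax = ps"
    unfolding clearing_state_def by (rule Greatest_equality) (use fpps great in auto)
  show ?thesis using cs fpps great psnn by simp
qed


lemma kernel_exists:
  fixes M :: "'b \<Rightarrow> 'b \<Rightarrow> real"
  assumes "finite S" "S \<noteq> {}" "\<forall>x y. 0 \<le> M x y" "\<forall>x\<in>S. (\<Sum>y\<in>S. M x y) > 0"
  shows "\<exists>q. (\<forall>x\<in>S. q x \<ge> 0) \<and> (\<exists>x\<in>S. q x > 0) \<and>
             (\<forall>x\<in>S. (\<Sum>y\<in>S. q y * M y x) = q x * (\<Sum>y\<in>S. M x y))"
  using assms
proof (induction "card S" arbitrary: S M rule: less_induct)
  case less
  obtain s where s: "s \<in> S" using less.prems by blast
  define S' where "S' = S - {s}"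
  have fS': "finite S'" using less.prems unfolding S'_def by simp
  have splitS: "\<And>f. (\<Sum>y\<in>S. f y) = f s + (\<Sum>y\<in>S'. f y)"
    unfolding S'_def using less.prems(1) s by (simp add: sum.remove)
  define D where "D = (\<Sum>y\<in>S'. M s y)"
  have D0: "D \<ge> 0" unfolding D_def using less.prems(3) by (simp add: sum_nonneg)
  show ?case
  proof (cases "D = 0")
    case True
    have Ms: "\<And>y. y \<in> S' \<Longrightarrow> M s y = 0"
      using True fS' less.prems(3) unfolding D_def by (simp add: sum_nonneg_eq_0_iff)
    define q where "q = (\<lambda>x. if x = s then (1::real) else 0)"
    have "\<forall>x\<in>S. (\<Sum>y\<in>S. q y * M y x) = q x * (\<Sum>y\<in>S. M x y)"
    proof
      fix x assume x: "x \<in> S"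
      have "(\<Sum>y\<in>S. q y * M y x) = M s x"
        unfolding splitS q_def S'_def by simp
      also have "\<dots> = q x * (\<Sum>y\<in>S. M x y)"
      proof (cases "x = s")
        case True thus ?thesis using \<open>D = 0\<close> unfolding q_def splitS D_def by simp
      next
        case False thus ?thesis using Ms x unfolding q_def S'_def by simp
      qed
      finally show "(\<Sum>y\<in>S. q y * M y x) = q x * (\<Sum>y\<in>S. M x y)" .
    qed
    moreover have "\<forall>x\<in>S. q x \<ge> 0" "\<exists>x\<in>S. q x > 0" using s unfolding q_def by auto
    ultimately show ?thesis by blast
  next
    case False
    hence Dp: "D > 0" using D0 by simp
    have S'ne: "S' \<noteq> {}" using Dp unfolding D_def by auto
    define M' where "M' = (\<lambda>x y. M x y + M x s * M s y / D)"
    have M'nn: "\<forall>x y. 0 \<le> M' x y" unfolding M'_def using less.prems(3) Dp by simp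
    have rowM': "\<And>x. (\<Sum>y\<in>S'. M' x y) = (\<Sum>y\<in>S. M x y)"
    proof -
      fix x
      have "(\<Sum>y\<in>S'. M' x y) = (\<Sum>y\<in>S'. M x y) + M x s / D * (\<Sum>y\<in>S'. M s y)"
        unfolding M'_def by (simp add: sum.distrib sum_distrib_left)
      also have "\<dots> = (\<Sum>y\<in>S'. M x y) + M x s" using Dp unfolding D_def by simp
      finally show "(\<Sum>y\<in>S'. M' x y) = (\<Sum>y\<in>S. M x y)" unfolding splitS by simp
    qed
    have cardlt: "card S' < card S" unfolding S'_def
      by (rule card_Diff1_less[OF less.prems(1) s])
    have "\<forall>x\<in>S'. (\<Sum>y\<in>S'. M' x y) > 0" using rowM' less.prems(4) unfolding S'_def by auto
    then obtain q' where q': "\<forall>x\<in>S'. q' x \<ge> 0" "\<exists>x\<in>S'. q' x > 0"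
      "\<forall>x\<in>S'. (\<Sum>y\<in>S'. q' y * M' y x) = q' x * (\<Sum>y\<in>S'. M' x y)"
      using less.hyps[OF cardlt fS' S'ne M'nn] by blast
    define qs where "qs = (\<Sum>y\<in>S'. q' y * M y s) / D"
    define q where "q = (\<lambda>x. if x = s then qs else q' x)"
    have qS': "\<And>f. (\<Sum>y\<in>S'. q y * f y) = (\<Sum>y\<in>S'. q' y * f y)"
      unfolding q_def S'_def by (intro sum.cong) auto
    have qsnn: "qs \<ge> 0" unfolding qs_def using q'(1) less.prems(3) Dp
      by (intro divide_nonneg_pos sum_nonneg mult_nonneg_nonneg) auto
    have bal: "\<forall>x\<in>S. (\<Sum>y\<in>S. q y * M y x) = q x * (\<Sum>y\<in>S. M x y)"
    proof
      fix x assume x: "x \<in> S"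
      show "(\<Sum>y\<in>S. q y * M y x) = q x * (\<Sum>y\<in>S. M x y)"
      proof (cases "x = s")
        case True
        have "(\<Sum>y\<in>S. q y * M y x) = qs * M s s + qs * D"
          unfolding splitS qS' True using Dp unfolding qs_def q_def by simp
        also have "\<dots> = q x * (\<Sum>y\<in>S. M x y)" unfolding splitS True q_def D_def
          by (simp add: algebra_simps)
        finally show ?thesis .
      next
        case False
        hence xS': "x \<in> S'" using x unfolding S'_def by simp
        have "(\<Sum>y\<in>S'. q' y * M' y x) = (\<Sum>y\<in>S'. q' y * M y x) + M s x / D * (\<Sum>y\<in>S'. q' y * M y s)"
          unfolding M'_def by (simp add: algebra_simps sum.distrib sum_distrib_left)
        also have "\<dots> = (\<Sum>y\<in>S'. q' y * M y x) + qs * M s x" unfolding qs_def by simp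
        finally have e: "(\<Sum>y\<in>S'. q' y * M' y x) = (\<Sum>y\<in>S'. q' y * M y x) + qs * M s x" .
        have "(\<Sum>y\<in>S. q y * M y x) = qs * M s x + (\<Sum>y\<in>S'. q' y * M y x)"
          unfolding splitS using qS'[of "\<lambda>y. M y x"] by (simp add: q_def)
        also have "\<dots> = q' x * (\<Sum>y\<in>S'. M' x y)" using e q'(3) xS' by simp
        also have "\<dots> = q x * (\<Sum>y\<in>S. M x y)" using rowM' False unfolding q_def by simp
        finally show ?thesis .
      qed
    qed
    have "\<forall>x\<in>S. q x \<ge> 0" using q'(1) qsnn unfolding q_def S'_def by auto
    moreover have "\<exists>x\<in>S. q x > 0" using q'(2) unfolding q_def S'_def by auto
    ultimately show ?thesis using bal by blast
  qed
qed


lemma clearing_facts: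
  assumes fin: "finite V" and nn: "\<forall>x y. 0 \<le> l x y"
    and sup: "\<forall>x y. l x y > 0 \<longrightarrow> x \<in> V \<and> y \<in> V" and axn: "\<forall>b. 0 \<le> ax b"
  defines "p \<equiv> clearing_state 1 V l ax"
  defines "G \<equiv> gross_assets V l ax p"
  shows "\<forall>u\<in>V. \<forall>b\<in>V. p u b = min (G u) (total_liab V l u) * l u b / total_liab V l u"
    and "\<forall>b\<in>V. G b = ax b + (\<Sum>u\<in>V. p u b)"
    and "\<forall>u b. 0 \<le> p u b"
    and "\<forall>b. 0 \<le> G b"
    and "\<forall>b. clearing_assets 1 V l ax b = G b"
    and "\<forall>q. fixed_point 1 V l ax q \<longrightarrow> q \<le> p"
    and "Fm V l ax p = p"
proof -
  have cp: "fixed_point 1 V l ax p" "\<forall>q. fixed_point 1 V l ax q \<longrightarrow> q \<le> p" "\<forall>u b. 0 \<le> p u b"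
    using clearing_props[OF fin nn axn] unfolding p_def by auto
  have fp: "Fm V l ax p = p" using cp(1) fixed_point_Fm by blast
  show "Fm V l ax p = p" by (rule fp)
  show "\<forall>q. fixed_point 1 V l ax q \<longrightarrow> q \<le> p" "\<forall>u b. 0 \<le> p u b" using cp by auto
  have off: "\<And>u b. \<not> l u b > 0 \<Longrightarrow> p u b = 0"
  proof -
    fix u b assume "\<not> l u b > 0"
    hence "p u b = Fm V l ax p u b" using fp by simp
    also have "\<dots> = 0" unfolding Fm_def using \<open>\<not> l u b > 0\<close> by simp
    finally show "p u b = 0" .
  qed
  have off0: "\<And>u b. \<not> l u b > 0 \<Longrightarrow> l u b = 0"
  proof -
    fix u b assume "\<not> l u b > 0" moreover have "0 \<le> l u b" using nn by blast
    ultimately show "l u b = 0" by simp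
  qed
  show "\<forall>u\<in>V. \<forall>b\<in>V. p u b = min (G u) (total_liab V l u) * l u b / total_liab V l u"
  proof (intro ballI)
    fix u b assume ub: "u \<in> V" "b \<in> V"
    show "p u b = min (G u) (total_liab V l u) * l u b / total_liab V l u"
    proof (cases "l u b > 0")
      case True
      have "p u b = Fm V l ax p u b" using fp by simp
      thus ?thesis unfolding Fm_def G_def using True ub by simp
    next
      case False thus ?thesis using off off0 by simp
    qed
  qed
  show "\<forall>b\<in>V. G b = ax b + (\<Sum>u\<in>V. p u b)"
  proof
    fix b assume "b \<in> V"
    have "(\<Sum>u\<in>{u \<in> V. l u b > 0}. p u b) = (\<Sum>u\<in>V. p u b)"
      using fin off by (intro sum.mono_neutral_left) auto
    thus "G b = ax b + (\<Sum>u\<in>V. p u b)" unfolding G_def gross_assets_def by simp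
  qed
  show "\<forall>b. 0 \<le> G b" unfolding G_def gross_assets_def using axn cp(3)
    by (simp add: sum_nonneg)
  show "\<forall>b. clearing_assets 1 V l ax b = G b"
    unfolding clearing_assets_def G_def p_def assets1 by simp
qed

lemma sum_two:
  assumes "finite S" "v \<in> S" "w \<in> S" "v \<noteq> w" "\<forall>b\<in>S. b \<noteq> v \<longrightarrow> b \<noteq> w \<longrightarrow> f b = 0"
  shows "sum f S = f v + f w"
proof -
  have "sum f S = sum f {v, w}"
    using assms by (intro sum.mono_neutral_right) auto
  thus ?thesis using assms(4) by simp
qed


theorem proposition1:
  fixes V :: "'b set" and l :: "'b \<Rightarrow> 'b \<Rightarrow> nat" and ax :: "'b \<Rightarrow> nat"
    and v w :: 'b and \<alpha> \<beta> :: "'b \<Rightarrow> real"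
  assumes "finite V"
    and "\<And>x y. l x y > 0 \<Longrightarrow> x \<in> V \<and> y \<in> V"
    and "valid_multi_trade V (\<lambda>x y. real (l x y)) (\<lambda>b. real (ax b)) v w \<alpha> \<beta>"
  shows "\<not> (clearing_assets 1 V (trade_liab V (\<lambda>x y. real (l x y)) v w \<beta>)
                (trade_ext V (\<lambda>x y. real (l x y)) (\<lambda>b. real (ax b)) v w \<alpha> \<beta>) v
              > clearing_assets 1 V (\<lambda>x y. real (l x y)) (\<lambda>b. real (ax b)) v
          \<and> clearing_assets 1 V (trade_liab V (\<lambda>x y. real (l x y)) v w \<beta>)
                (trade_ext V (\<lambda>x y. real (l x y)) (\<lambda>b. real (ax b)) v w \<alpha> \<beta>) w
              > clearing_assets 1 V (\<lambda>x y. real (l x y)) (\<lambda>b. real (ax b)) w)"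
proof -
  define lp where "lp = (\<lambda>x y. real (l x y))"
  define axp where "axp = (\<lambda>b. real (ax b))"
  define l2 where "l2 = trade_liab V lp v w \<beta>"
  define ax2 where "ax2 = trade_ext V lp axp v w \<alpha> \<beta>"
  define T where "T = traded_debtors V lp v w"
  define \<rho> where "\<rho> = trade_return V lp v w \<alpha> \<beta>"
  have fin: "finite V" by (rule assms(1))
  have valid: "v \<in> V" "w \<in> V" "v \<noteq> w"
    "\<forall>u\<in>T. 0 \<le> \<alpha> u \<and> \<alpha> u \<le> 1 \<and> 0 \<le> \<beta> u \<and> \<beta> u \<le> 1" "\<rho> \<le> axp w"
    using assms(3) unfolding valid_multi_trade_def T_def \<rho>_def lp_def axp_def by auto
  have TV: "T \<subseteq> V" unfolding T_def traded_debtors_def by auto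
  have lpnn: "\<forall>x y. 0 \<le> lp x y" unfolding lp_def by simp
  have lpsup: "\<forall>x y. lp x y > 0 \<longrightarrow> x \<in> V \<and> y \<in> V" unfolding lp_def using assms(2) by simp
  have axpnn: "\<forall>b. 0 \<le> axp b" unfolding axp_def by simp
  have rho0: "0 \<le> \<rho>" unfolding \<rho>_def trade_return_def using valid(4) lpnn
    unfolding T_def by (intro sum_nonneg mult_nonneg_nonneg) auto
  have l2nn: "\<forall>x y. 0 \<le> l2 x y"
    unfolding l2_def trade_liab_def using valid(4) lpnn unfolding T_def
    by (auto intro!: add_nonneg_nonneg mult_nonneg_nonneg)
  have l2sup: "\<forall>x y. l2 x y > 0 \<longrightarrow> x \<in> V \<and> y \<in> V"
    unfolding l2_def trade_liab_def using lpsup valid(1,2) TV unfolding T_def by auto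
  have ax2nn: "\<forall>b. 0 \<le> ax2 b"
    unfolding ax2_def trade_ext_def using axpnn rho0 valid(5) unfolding \<rho>_def by auto
  have rowS: "\<And>u S. S \<subseteq> V \<Longrightarrow> v \<in> S \<Longrightarrow> w \<in> S \<Longrightarrow> (\<Sum>b\<in>S. l2 u b) = (\<Sum>b\<in>S. lp u b)"
  proof -
    fix u S assume S: "S \<subseteq> V" "v \<in> S" "w \<in> S"
    have fS: "finite S" using S fin finite_subset by blast
    have "(\<Sum>b\<in>S. l2 u b - lp u b) = (l2 u v - lp u v) + (l2 u w - lp u w)"
      using fS S valid(3) by (intro sum_two) (auto simp: l2_def trade_liab_def T_def)
    also have "\<dots> = 0" using valid(3) unfolding l2_def trade_liab_def T_def by (auto simp: algebra_simps)
    finally show "(\<Sum>b\<in>S. l2 u b) = (\<Sum>b\<in>S. lp u b)" by (simp add: sum_subtractf)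
  qed
  define L where "L = total_liab V lp"
  have L2: "total_liab V l2 = L" unfolding L_def total_liab_def
    using rowS[of V] valid(1,2) by (intro ext) simp
  have axS: "\<And>S. S \<subseteq> V \<Longrightarrow> v \<in> S \<Longrightarrow> w \<in> S \<Longrightarrow> (\<Sum>b\<in>S. ax2 b - axp b) = 0"
  proof -
    fix S assume S: "S \<subseteq> V" "v \<in> S" "w \<in> S"
    have fS: "finite S" using S fin finite_subset by blast
    have "(\<Sum>b\<in>S. ax2 b - axp b) = (ax2 v - axp v) + (ax2 w - axp w)"
      using fS S valid(3) by (intro sum_two) (auto simp: ax2_def trade_ext_def)
    also have "\<dots> = 0" using valid(3) unfolding ax2_def trade_ext_def \<rho>_def by auto
    finally show "(\<Sum>b\<in>S. ax2 b - axp b) = 0" .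
  qed
  define p where "p = clearing_state 1 V lp axp"
  define G where "G = gross_assets V lp axp p"
  define p2 where "p2 = clearing_state 1 V l2 ax2"
  define G2 where "G2 = gross_assets V l2 ax2 p2"
  note F1 = clearing_facts[OF fin lpnn lpsup axpnn, folded p_def, folded G_def, folded L_def]
  note F2 = clearing_facts[OF fin l2nn l2sup ax2nn, folded p2_def, folded G2_def, unfolded L2]
  define out where "out = (\<lambda>u. min (G u) (L u))"
  define out2 where "out2 = (\<lambda>u. min (G2 u) (L u))"
  have Lnn: "\<And>u. 0 \<le> L u" unfolding L_def total_liab_def using lpnn by (simp add: sum_nonneg)
  have main: "\<not> (G2 v > G v \<and> G2 w > G w)"
  proof
    assume H: "G2 v > G v \<and> G2 w > G w"
    define S where "S = {b \<in> V. G2 b > G b}"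
    have SV: "S \<subseteq> V" unfolding S_def by auto
    have fS: "finite S" using SV fin finite_subset by blast
    have vS: "v \<in> S" "w \<in> S" unfolding S_def using H valid by auto
    define cS where "cS = (\<lambda>u. \<Sum>b\<in>S. lp u b)"
    define t where "t = (\<lambda>u. (out2 u - out u) * cS u / L u)"
    have stepA: "(\<Sum>b\<in>S. G2 b - G b) = (\<Sum>u\<in>V. t u)"
    proof -
      have GS: "\<And>b. b \<in> S \<Longrightarrow> G2 b - G b = (ax2 b - axp b) + (\<Sum>u\<in>V. p2 u b - p u b)"
        using F1(2) F2(2) SV by (auto simp: sum_subtractf)
      have inner: "\<And>u. u \<in> V \<Longrightarrow> (\<Sum>b\<in>S. p2 u b - p u b) = t u"
      proof -
        fix u assume u: "u \<in> V"
        have "(\<Sum>b\<in>S. p2 u b - p u b) = (\<Sum>b\<in>S. out2 u * l2 u b / L u - out u * lp u b / L u)"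
          using F1(1) F2(1) u SV unfolding out_def out2_def by (intro sum.cong) auto
        also have "\<dots> = out2 u * (\<Sum>b\<in>S. l2 u b) / L u - out u * (\<Sum>b\<in>S. lp u b) / L u"
          by (simp add: sum_subtractf sum_divide_distrib[symmetric] sum_distrib_left[symmetric])
        also have "\<dots> = t u" unfolding t_def cS_def rowS[OF SV vS]
          by (simp add: diff_divide_distrib left_diff_distrib)
        finally show "(\<Sum>b\<in>S. p2 u b - p u b) = t u" .
      qed
      have "(\<Sum>b\<in>S. G2 b - G b) = (\<Sum>b\<in>S. ax2 b - axp b) + (\<Sum>b\<in>S. \<Sum>u\<in>V. p2 u b - p u b)"
        using GS by (simp add: sum.distrib)
      also have "\<dots> = (\<Sum>u\<in>V. \<Sum>b\<in>S. p2 u b - p u b)" using axS[OF SV vS] sum.swap by simp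
      also have "\<dots> = (\<Sum>u\<in>V. t u)" using inner by simp
      finally show ?thesis .
    qed
    have cSle: "\<And>u. 0 \<le> cS u \<and> cS u \<le> L u"
    proof -
      fix u
      have "0 \<le> cS u" unfolding cS_def using lpnn by (simp add: sum_nonneg)
      moreover have "cS u \<le> L u" unfolding cS_def L_def total_liab_def
        using lpnn SV fin by (intro sum_mono2) auto
      ultimately show "0 \<le> cS u \<and> cS u \<le> L u" by simp
    qed
    have tS: "\<And>u. u \<in> S \<Longrightarrow> t u \<le> G2 u - G u"
    proof -
      fix u assume u: "u \<in> S"
      hence gt: "G2 u > G u" unfolding S_def by simp
      have d: "0 \<le> out2 u - out u" "out2 u - out u \<le> G2 u - G u"
        using gt unfolding out_def out2_def by (auto simp: min_def)
      show "t u \<le> G2 u - G u"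
      proof (cases "L u = 0")
        case True thus ?thesis unfolding t_def using gt by simp
      next
        case False
        hence Lp: "L u > 0" using Lnn[of u] by simp
        have k: "0 \<le> cS u / L u" "cS u / L u \<le> 1" using cSle[of u] Lp by auto
        have "t u = (out2 u - out u) * (cS u / L u)" unfolding t_def by simp
        also have "\<dots> \<le> out2 u - out u" using mult_left_le[OF k(2) d(1)] .
        finally show ?thesis using d(2) by simp
      qed
    qed
    have tVS: "\<And>u. u \<in> V - S \<Longrightarrow> t u \<le> 0"
    proof -
      fix u assume u: "u \<in> V - S"
      hence "G2 u \<le> G u" unfolding S_def by auto
      hence "out2 u - out u \<le> 0" unfolding out_def out2_def by (auto simp: min_def)
      moreover have "0 \<le> cS u / L u" using cSle[of u] Lnn[of u] by simp
      ultimately show "t u \<le> 0" unfolding t_def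
        by (metis mult_nonpos_nonneg times_divide_eq_right)
    qed
    have teq: "\<And>u. u \<in> S \<Longrightarrow> t u = G2 u - G u"
    proof -
      have sV: "(\<Sum>u\<in>V. t u) = (\<Sum>u\<in>V - S. t u) + (\<Sum>u\<in>S. t u)"
        using sum.subset_diff[OF SV fin] by simp
      have "(\<Sum>u\<in>V - S. t u) \<le> 0" by (rule sum_nonpos) (rule tVS)
      hence "(\<Sum>u\<in>S. G2 u - G u - t u) \<le> 0" using stepA sV by (simp add: sum_subtractf)
      moreover have "\<forall>u\<in>S. 0 \<le> G2 u - G u - t u" using tS by simp
      ultimately have "(\<Sum>u\<in>S. G2 u - G u - t u) = 0"
        by (meson antisym sum_nonneg)
      hence "\<forall>u\<in>S. G2 u - G u - t u = 0"
        using sum_nonneg_eq_0_iff[OF fS, of "\<lambda>u. G2 u - G u - t u"] \<open>\<forall>u\<in>S. 0 \<le> G2 u - G u - t u\<close> by simp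
      thus "\<And>u. u \<in> S \<Longrightarrow> t u = G2 u - G u" by simp
    qed
    have stepC: "\<And>u. u \<in> S \<Longrightarrow> G u < L u \<and> cS u = L u"
    proof -
      fix u assume u: "u \<in> S"
      hence gt: "G2 u > G u" unfolding S_def by simp
      have te: "t u = G2 u - G u" using teq u by simp
      have d: "0 \<le> out2 u - out u" "out2 u - out u \<le> G2 u - G u"
        using gt unfolding out_def out2_def by (auto simp: min_def)
      have Lp: "L u > 0"
      proof (rule ccontr)
        assume "\<not> L u > 0" hence "L u = 0" using Lnn[of u] by simp
        hence "t u = 0" unfolding t_def by simp
        thus False using te gt by simp
      qed
      have k: "0 \<le> cS u / L u" "cS u / L u \<le> 1" using cSle[of u] Lp by auto
      have tk: "t u = (out2 u - out u) * (cS u / L u)" unfolding t_def by simp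
      have le1: "(out2 u - out u) * (cS u / L u) \<le> out2 u - out u" using mult_left_le[OF k(2) d(1)] .
      have dee: "out2 u - out u = G2 u - G u" using le1 tk te d(2) by linarith
      hence "(out2 u - out u) * (cS u / L u) = (out2 u - out u) * 1" using tk te by simp
      hence "cS u / L u = 1" using dee gt by (metis mult_cancel_left less_irrefl diff_gt_0_iff_gt)
      hence cL: "cS u = L u" using Lp by simp
      have "G u < L u"
      proof (rule ccontr)
        assume "\<not> G u < L u"
        hence "out u = L u" "out2 u = L u" using gt unfolding out_def out2_def by auto
        thus False using dee gt by simp
      qed
      thus "G u < L u \<and> cS u = L u" using cL by simp
    qed
    have closed: "\<And>u b. u \<in> S \<Longrightarrow> b \<in> V - S \<Longrightarrow> lp u b = 0"
    proof -
      fix u b assume u: "u \<in> S" and b: "b \<in> V - S"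
      have "L u = (\<Sum>y\<in>V - S. lp u y) + cS u"
        unfolding L_def total_liab_def cS_def using sum.subset_diff[OF SV fin] by simp
      hence "(\<Sum>y\<in>V - S. lp u y) = 0" using stepC[OF u] by simp
      hence "\<forall>y\<in>V - S. lp u y = 0"
        using sum_nonneg_eq_0_iff[of "V - S" "\<lambda>y. lp u y"] fin lpnn by simp
      thus "lp u b = 0" using b by simp
    qed
    have Lpos: "\<And>u. u \<in> S \<Longrightarrow> L u > 0" using stepC F1(4) by (meson le_less_trans)
    have rowL: "\<And>x. x \<in> S \<Longrightarrow> (\<Sum>y\<in>S. lp x y) = L x" using stepC unfolding cS_def by simp
    have kpre: "\<forall>x\<in>S. (\<Sum>y\<in>S. lp x y) > 0" using Lpos rowL by simp
    obtain q where q: "\<forall>x\<in>S. q x \<ge> 0" "\<exists>x\<in>S. q x > 0"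
      "\<forall>x\<in>S. (\<Sum>y\<in>S. q y * lp y x) = q x * (\<Sum>y\<in>S. lp x y)"
      using kernel_exists[OF fS _ lpnn kpre] vS by blast
    define \<epsilon> where "\<epsilon> = Min ((\<lambda>b. (L b - G b) / (q b * L b + 1)) ` S)"
    have den: "\<And>b. b \<in> S \<Longrightarrow> q b * L b + 1 > 0"
    proof -
      fix b assume b: "b \<in> S"
      have "0 \<le> q b * L b" using q(1) b Lnn[of b] by simp
      thus "q b * L b + 1 > 0" by simp
    qed
    have epos: "\<epsilon> > 0" unfolding \<epsilon>_def using fS vS
    proof (subst Min_gr_iff)
      show "\<forall>a\<in>(\<lambda>b. (L b - G b) / (q b * L b + 1)) ` S. 0 < a"
        using stepC den by auto
    qed auto
    have eb: "\<And>b. b \<in> S \<Longrightarrow> G b + \<epsilon> * q b * L b \<le> L b"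
    proof -
      fix b assume b: "b \<in> S"
      have "\<epsilon> \<le> (L b - G b) / (q b * L b + 1)" unfolding \<epsilon>_def using fS b by (intro Min_le) auto
      hence "\<epsilon> * (q b * L b + 1) \<le> L b - G b" using den[OF b] by (simp add: le_divide_eq)
      moreover have "\<epsilon> * (q b * L b) \<le> \<epsilon> * (q b * L b + 1)" using epos by simp
      ultimately show "G b + \<epsilon> * q b * L b \<le> L b" by (simp add: mult.assoc)
    qed
    define pt where "pt = (\<lambda>u b. p u b + (if u \<in> S then \<epsilon> * q u * lp u b else 0))"
    have lp0: "\<And>u b. \<not> lp u b > 0 \<Longrightarrow> lp u b = 0"
    proof -
      fix u b assume "\<not> lp u b > 0" moreover have "0 \<le> lp u b" using lpnn by blast
      ultimately show "lp u b = 0" by simp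
    qed
    have grossT: "\<And>x. x \<in> V \<Longrightarrow> gross_assets V lp axp pt x = G x + \<epsilon> * (\<Sum>u\<in>S. q u * lp u x)"
    proof -
      fix x assume x: "x \<in> V"
      define E where "E = {u \<in> V. lp u x > 0}"
      have "(\<Sum>u\<in>E. pt u x) = (\<Sum>u\<in>E. p u x) + (\<Sum>u\<in>E. if u \<in> S then \<epsilon> * q u * lp u x else 0)"
        unfolding pt_def by (simp add: sum.distrib)
      moreover have "(\<Sum>u\<in>E. if u \<in> S then \<epsilon> * q u * lp u x else 0)
          = (\<Sum>u\<in>V. if u \<in> S then \<epsilon> * q u * lp u x else 0)"
        unfolding E_def using fin lp0 by (intro sum.mono_neutral_left) auto
      moreover have "(\<Sum>u\<in>V. if u \<in> S then \<epsilon> * q u * lp u x else 0) = (\<Sum>u\<in>S. \<epsilon> * q u * lp u x)"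
        using sum.inter_restrict[OF fin, of "\<lambda>u. \<epsilon> * q u * lp u x" S] SV
        by (simp add: Int_absorb1)
      moreover have "(\<Sum>u\<in>S. \<epsilon> * q u * lp u x) = \<epsilon> * (\<Sum>u\<in>S. q u * lp u x)"
        by (simp add: sum_distrib_left mult.assoc)
      ultimately show "gross_assets V lp axp pt x = G x + \<epsilon> * (\<Sum>u\<in>S. q u * lp u x)"
        unfolding gross_assets_def G_def E_def by simp
    qed
    have fpT: "Fm V lp axp pt = pt"
    proof (intro ext)
      fix x y
      show "Fm V lp axp pt x y = pt x y"
      proof (cases "x \<in> V \<and> y \<in> V \<and> lp x y > 0")
        case True
        have Fmxy: "Fm V lp axp pt x y = min (gross_assets V lp axp pt x) (L x) * lp x y / L x"
          unfolding Fm_def L_def using True by simp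
        have px: "p x y = out x * lp x y / L x" using F1(1) True unfolding out_def by simp
        show ?thesis
        proof (cases "x \<in> S")
          case xS: True
          have bal: "(\<Sum>u\<in>S. q u * lp u x) = q x * L x" using q(3) xS rowL by simp
          have gT: "gross_assets V lp axp pt x = G x + \<epsilon> * q x * L x"
            using grossT True bal by (simp add: mult.assoc)
          have mn: "min (gross_assets V lp axp pt x) (L x) = G x + \<epsilon> * q x * L x"
            using gT eb[OF xS] by simp
          have ox: "out x = G x" unfolding out_def using stepC[OF xS] by simp
          have Lx: "L x > 0" using Lpos xS by simp
          have r: "(G x + \<epsilon> * q x * L x) * lp x y / L x = pt x y"
            unfolding pt_def px ox using xS Lx by (simp add: field_simps)
          show ?thesis using Fmxy r mn by simp
        next
          case xS: False
          have "\<And>u. u \<in> S \<Longrightarrow> q u * lp u x = 0" using closed xS True by simp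
          hence "(\<Sum>u\<in>S. q u * lp u x) = 0" by (intro sum.neutral) blast
          hence "gross_assets V lp axp pt x = G x" using grossT True by simp
          hence "Fm V lp axp pt x y = min (G x) (L x) * lp x y / L x" using Fmxy by simp
          moreover have "pt x y = min (G x) (L x) * lp x y / L x"
            unfolding pt_def px out_def using xS by simp
          ultimately show ?thesis by simp
        qed
      next
        case False
        have F0: "Fm V lp axp pt x y = 0" unfolding Fm_def if_not_P[OF False] by simp
        have l0: "lp x y = 0" using False lpsup lp0 by blast
        have "p x y = Fm V lp axp p x y" using F1(7) by simp
        also have "\<dots> = 0" unfolding Fm_def if_not_P[OF False] by simp
        finally have "pt x y = 0" unfolding pt_def using l0 by simp
        thus ?thesis using F0 by simp
      qed
    qed
    have ptle: "pt \<le> p" using F1(6) fpT fixed_point_Fm by blast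
    obtain x0 where x0: "x0 \<in> S" "q x0 > 0" using q(2) by blast
    obtain y0 where y0: "y0 \<in> V" "lp x0 y0 > 0"
    proof (rule ccontr)
      assume "\<not> thesis"
      hence "\<forall>y\<in>V. lp x0 y \<le> 0" using that by (meson not_less)
      hence "L x0 \<le> 0" unfolding L_def total_liab_def by (simp add: sum_nonpos)
      thus False using Lpos[OF x0(1)] by simp
    qed
    have "pt x0 y0 > p x0 y0" unfolding pt_def using x0 y0 epos by simp
    moreover have "pt x0 y0 \<le> p x0 y0" using ptle by (simp add: le_fun_def)
    ultimately show False by simp
  qed
  show ?thesis using main F1(5) F2(5)
    unfolding lp_def[symmetric] axp_def[symmetric] l2_def[symmetric] ax2_def[symmetric] by simp
qed

end
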